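(* Let $q\equiv 1\pmod 4$ be a prime power. If $\psi$ is a bijection from the vertex set of a triangle $\{x,y,z\}$ of $Tr(SP_q)$ to the vertex set of a triangle $\{x',y',z'\}$ of $Tr(SP_q)$ that maps each of the three edges to an edge of the same sign, then $\psi$ extends to a (sign-preserving) automorphism of $Tr(SP_q)$.
   Context: A signified graph is a simple graph with each edge labelled positive or negative; a triangle is a set of three pairwise adjacent vertices; an automorphism is a vertex bijection mapping edges to edges of the same sign and non-edges to non-edges. Let $q\equiv 1\pmod 4$ be a prime power; for $x\in\mathbb{F}_q^*$ let $\mathrm{sq}(x)=+1$ if $x$ is a square and $-1$ otherwise. The Tromp signified Paley graph $Tr(SP_q)$ has vertex set $\{u_i : u\in\mathbb{F}_q\cup\{\infty\},\ i\in\{0,1\}\}$. For $u\ne v$ in $\mathbb{F}_q$, $u_iv_j$ is an edge of sign $\mathrm{sq}(u-v)(-1)^{i+j}$; for $v\in\mathbb{F}_q$, $\infty_iv_j$ is an edge of sign $(-1)^{i+j}$; there are no other edges. *)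

theory Defs
  imports Main
begin

text \<open>Vertices of Tr(SP_q): pairs (u, i) with u in F_q extended by infinity
  (None = infinity, Some u = u) and i in {0,1} (False = 0, True = 1).
  The finite field F_q is a type 'a of class finite field; q = CARD('a).\<close>

type_synonym 'a tvert = "'a option \<times> bool"

definition sq :: "'a::field \<Rightarrow> int" where
  "sq x = (if \<exists>y. y * y = x then 1 else -1)"

definition par_sign :: "bool \<Rightarrow> bool \<Rightarrow> int" where
  "par_sign i j = (if i = j then 1 else -1)"  \<comment> \<open>(-1)^(i+j)\<close>

fun tr_adj :: "'a::field tvert \<Rightarrow> 'a tvert \<Rightarrow> bool" where
  "tr_adj (Some u, i) (Some v, j) = (u \<noteq> v)"
| "tr_adj (None, i) (Some v, j) = True"
| "tr_adj (Some u, i) (None, j) = True"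
| "tr_adj (None, i) (None, j) = False"

fun tr_sign :: "'a::field tvert \<Rightarrow> 'a tvert \<Rightarrow> int" where
  "tr_sign (Some u, i) (Some v, j) = sq (u - v) * par_sign i j"
| "tr_sign (None, i) (Some v, j) = par_sign i j"
| "tr_sign (Some u, i) (None, j) = par_sign i j"
| "tr_sign (None, i) (None, j) = 0"

definition tr_triangle :: "'a::field tvert \<Rightarrow> 'a tvert \<Rightarrow> 'a tvert \<Rightarrow> bool" where
  "tr_triangle x y z \<longleftrightarrow> tr_adj x y \<and> tr_adj y z \<and> tr_adj x z"

definition tr_aut :: "('a::field tvert \<Rightarrow> 'a tvert) \<Rightarrow> bool" where
  "tr_aut f \<longleftrightarrow> bij f \<and>
     (\<forall>a b. tr_adj (f a) (f b) = tr_adj a b) \<and>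
     (\<forall>a b. tr_adj a b \<longrightarrow> tr_sign (f a) (f b) = tr_sign a b)"

end

theory Submission imports Defs begin

lemma sq_cases: "sq x = 1 \<or> sq x = -1" by (simp add: sq_def)
lemma sq_1_iff: "sq x = 1 \<longleftrightarrow> (\<exists>y. y*y = x)" by (simp add: sq_def)
lemma sq_m1_iff: "sq x = -1 \<longleftrightarrow> \<not>(\<exists>y. y*y = x)" by (simp add: sq_def)

lemma even_invol:
  "finite A \<Longrightarrow> (\<And>x. x\<in>A \<Longrightarrow> g x \<in> A \<and> g (g x) = x \<and> g x \<noteq> x) \<Longrightarrow> even (card A)"
proof (induction "card A" arbitrary: A rule: less_induct)
  case less
  show ?case
  proof (cases "A = {}")
    case True thus ?thesis by simp
  next
    case False
    then obtain x where x: "x \<in> A" by blast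
    let ?B = "A - {x, g x}"
    have gx: "g x \<in> A" "g x \<noteq> x" "g (g x) = x" using less.prems(2)[OF x] by auto
    have cB: "card ?B = card A - 2" using x gx less.prems(1) by (simp add: card_Diff_subset)
    have c2: "card A \<ge> 2"
    proof -
      have "card {x, g x} \<le> card A" using x gx less.prems(1) by (intro card_mono) auto
      thus ?thesis using gx by simp
    qed
    have "even (card ?B)"
    proof (rule less.hyps)
      show "card ?B < card A" using cB c2 by simp
      show "finite ?B" using less.prems(1) by simp
      fix y assume y: "y \<in> ?B"
      have h: "g y \<in> A" "g (g y) = y" "g y \<noteq> y" using less.prems(2)[of y] y by auto
      have "g y \<noteq> x"
      proof
        assume "g y = x" hence "g (g y) = g x" by simp
        hence "y = g x" using h(2) by simp
        thus False using y by auto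
      qed
      moreover have "g y \<noteq> g x"
      proof
        assume "g y = g x" hence "g (g y) = g (g x)" by simp
        hence "y = x" using h(2) gx(3) by simp
        thus False using y by auto
      qed
      ultimately show "g y \<in> ?B \<and> g (g y) = y \<and> g y \<noteq> y" using h by auto
    qed
    thus ?thesis using cB c2 by presburger
  qed
qed

context
  fixes dummy :: "'a::{finite,field}"
  assumes C: "card (UNIV::'a set) mod 4 = 1"
begin

lemma two_nz: "(2::'a) \<noteq> 0"
proof
  assume h: "(2::'a) = 0"
  have "even (card (UNIV::'a set))"
  proof (rule even_invol[where g = "\<lambda>x. x + 1"])
    fix x :: 'a
    have "x + 1 + 1 = x + 2" by simp
    thus "x + 1 \<in> UNIV \<and> x + 1 + 1 = x \<and> x + 1 \<noteq> x" using h by simp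
  qed simp
  thus False using C by presburger
qed

lemma neg_ne: "(x::'a) \<noteq> 0 \<Longrightarrow> x \<noteq> - x"
proof
  assume "x \<noteq> 0" "x = - x"
  hence "2 * x = 0" by (metis mult_2 neg_eq_iff_add_eq_0)
  thus False using two_nz \<open>x \<noteq> 0\<close> by simp
qed

lemma sq_eq_sq: "(y::'a) * y = r * r \<longleftrightarrow> y = r \<or> y = - r"
proof -
  have "y * y = r * r \<longleftrightarrow> (y - r) * (y + r) = 0" by (simp add: algebra_simps)
  thus ?thesis by (auto simp: eq_neg_iff_add_eq_0)
qed

definition QQ :: "'a set" where "QQ = {x. x \<noteq> 0 \<and> (\<exists>y. y*y = x)}"
definition NN :: "'a set" where "NN = {x. \<not>(\<exists>y. y*y = x)}"

lemma card_nz: "card (UNIV - {0::'a}) = 2 * card QQ"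
proof -
  have e: "UNIV - {0::'a} = (\<Union>q\<in>QQ. {y. y*y = q})" unfolding QQ_def by auto
  have "card (\<Union>q\<in>QQ. {y. y*y = q}) = (\<Sum>q\<in>QQ. card {y. y*y = q})"
    by (rule card_UN_disjoint) auto
  also have "\<dots> = (\<Sum>q\<in>QQ. 2)"
  proof (rule sum.cong[OF refl])
    fix q assume "q \<in> QQ"
    then obtain r where r: "r \<noteq> 0" "q = r * r" unfolding QQ_def by auto
    have "{y. y*y = q} = {r, -r}" using r sq_eq_sq by auto
    thus "card {y. y*y = q} = 2" using neg_ne[OF r(1)] by simp
  qed
  finally show ?thesis using e by simp
qed

lemma card_NN: "card NN = card QQ"
proof -
  have "UNIV - {0::'a} = QQ \<union> NN" "QQ \<inter> NN = {}" unfolding QQ_def NN_def by auto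
  hence "card (UNIV - {0::'a}) = card QQ + card NN" by (simp add: card_Un_disjoint)
  thus ?thesis using card_nz by simp
qed

lemma NN_mult: assumes a: "a \<in> NN" and b: "b \<in> NN" shows "\<exists>y. y * y = a * b"
proof -
  have a0: "a \<noteq> 0" using a unfolding NN_def by force
  have sub: "(\<lambda>x. a * x) ` QQ \<subseteq> NN"
  proof
    fix w assume "w \<in> (\<lambda>x. a * x) ` QQ"
    then obtain x where x0: "w = a * x" "x \<in> QQ" by auto
    then obtain r where x: "w = a * x" "x = r * r" "r \<noteq> 0" unfolding QQ_def by auto
    have "\<not>(\<exists>t. t * t = w)"
    proof
      assume "\<exists>t. t * t = w"
      then obtain t where "t * t = a * (r * r)" using x by auto
      hence "(t / r) * (t / r) = a" using x(3) by (simp add: field_simps)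
      thus False using a unfolding NN_def by blast
    qed
    thus "w \<in> NN" unfolding NN_def by simp
  qed
  have "card ((\<lambda>x. a * x) ` QQ) = card QQ" using a0 by (intro card_image) (auto simp: inj_on_def)
  hence "(\<lambda>x. a * x) ` QQ = NN" using sub card_NN by (intro card_subset_eq) auto
  with b obtain x where "b = a * x" "x \<in> QQ" by auto
  then obtain r where "b = a * (r * r)" unfolding QQ_def by auto
  hence "(a * r) * (a * r) = a * b" by (simp add: algebra_simps)
  thus ?thesis by blast
qed

lemma sq_mult: assumes "a \<noteq> 0" "b \<noteq> 0" shows "sq (a * (b::'a)) = sq a * sq b"
proof (cases "\<exists>y. y * y = a")
  case True
  then obtain r where r: "a = r * r" by auto
  hence r0: "r \<noteq> 0" using assms by auto
  show ?thesis
  proof (cases "\<exists>y. y * y = b")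
    case True
    then obtain s where "b = s * s" by auto
    hence "(r*s)*(r*s) = a * b" using r by (simp add: algebra_simps)
    hence "sq (a*b) = 1" unfolding sq_1_iff by blast
    moreover have "sq a = 1" "sq b = 1" using r \<open>b = s * s\<close> unfolding sq_1_iff by blast+
    ultimately show ?thesis by simp
  next
    case False
    have "\<not>(\<exists>y. y * y = a * b)"
    proof
      assume "\<exists>y. y * y = a * b"
      then obtain t where "t * t = (r * r) * b" using r by auto
      hence "(t / r) * (t / r) = b" using r0 by (simp add: field_simps)
      thus False using False by blast
    qed
    thus ?thesis using False True unfolding sq_def by auto
  qed
next
  case False
  show ?thesis
  proof (cases "\<exists>y. y * y = b")
    case True
    then obtain r where r: "b = r * r" by auto
    hence r0: "r \<noteq> 0" using assms by auto
    have "\<not>(\<exists>y. y * y = a * b)"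
    proof
      assume "\<exists>y. y * y = a * b"
      then obtain t where "t * t = a * (r * r)" using r by auto
      hence "(t / r) * (t / r) = a" using r0 by (simp add: field_simps)
      thus False using False by blast
    qed
    thus ?thesis using False True unfolding sq_def by auto
  next
    case F2: False
    have "\<exists>y. y * y = a * b" using NN_mult False F2 unfolding NN_def by auto
    thus ?thesis using False F2 unfolding sq_def by auto
  qed
qed

lemma sq_inverse: "sq (inverse (a::'a)) = sq a"
proof -
  have "(\<exists>y. y * y = a) \<Longrightarrow> (\<exists>y. y * y = inverse a)" for a :: 'a
  proof -
    assume "\<exists>y. y * y = a"
    then obtain y where "y * y = a" by auto
    hence "inverse y * inverse y = inverse a" by (metis inverse_mult_distrib)
    thus ?thesis by blast
  qed
  from this[of a] this[of "inverse a"] show ?thesis unfolding sq_def by auto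
qed

lemma minus_one_sq: "\<exists>i. i * i = (-1::'a)"
proof (rule ccontr)
  assume nm: "\<not> (\<exists>i. i * i = (-1::'a))"
  let ?Q' = "QQ - {1}"
  have "even (card ?Q')"
  proof (rule even_invol[where g = inverse])
    fix x assume x: "x \<in> ?Q'"
    then obtain r where r: "x = r * r" "x \<noteq> 0" "x \<noteq> 1" unfolding QQ_def by auto
    have "inverse x = inverse r * inverse r" using r by (simp add: nonzero_inverse_mult_distrib)
    hence "inverse x \<in> QQ" using r unfolding QQ_def by auto
    moreover have "inverse x \<noteq> 1" using r(3) by (metis inverse_1 inverse_inverse_eq)
    moreover have "inverse x \<noteq> x"
    proof
      assume "inverse x = x"
      hence "x * x = x * inverse x" by simp
      hence "x * x = 1 * 1" using r(2) by simp
      hence "x = 1 \<or> x = -1" using sq_eq_sq by blast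
      thus False using r nm by auto
    qed
    ultimately show "inverse x \<in> ?Q' \<and> inverse (inverse x) = x \<and> inverse x \<noteq> x" by simp
  qed simp
  moreover have "1 \<in> QQ" unfolding QQ_def by (auto intro: exI[of _ 1])
  moreover have "card (QQ - {1}) = card QQ - 1" "card QQ \<ge> 1"
    using \<open>1 \<in> QQ\<close> by (auto simp: card_Diff_singleton card_gt_0_iff Suc_le_eq)
  ultimately have "odd (card QQ)" by presburger
  moreover have "card (UNIV - {0::'a}) = card (UNIV::'a set) - 1" by (simp add: card_Diff_singleton)
  ultimately show False using card_nz C by presburger
qed

lemma sq_neg: "sq (- (a::'a)) = sq a"
proof -
  obtain i :: 'a where i: "i * i = -1" using minus_one_sq by blast
  have "(\<exists>y. y * y = a) \<Longrightarrow> (\<exists>y. y * y = - a)" for a :: 'a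
  proof -
    assume "\<exists>y. y * y = a"
    then obtain y where "y * y = a" by auto
    have "(i*y)*(i*y) = (i*i)*(y*y)" by (simp add: algebra_simps)
    hence "(i*y)*(i*y) = - a" using i \<open>y * y = a\<close> by simp
    thus ?thesis by blast
  qed
  from this[of a] this[of "-a"] show ?thesis unfolding sq_def by auto
qed

lemma exists_nonsq: "\<exists>n::'a. sq n = -1"
proof -
  have "1 \<in> QQ" unfolding QQ_def by (auto intro: exI[of _ 1])
  hence "card QQ > 0" by (auto simp: card_gt_0_iff)
  hence "NN \<noteq> {}" using card_NN by auto
  thus ?thesis unfolding NN_def sq_def by auto
qed

end

lemma mo_id[simp]: "map_option (\<lambda>x. x) a = a" by (cases a) auto

lemma adj_fst: "tr_adj a b \<longleftrightarrow> fst a \<noteq> fst b"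
  by (cases a; cases b; cases "fst a"; cases "fst b"; auto)

lemma aut_intro:
  assumes "bij f" "\<And>a b. fst (f a) \<noteq> fst (f b) \<longleftrightarrow> fst a \<noteq> fst b"
    "\<And>a b. fst a \<noteq> fst b \<Longrightarrow> tr_sign (f a) (f b) = tr_sign a b"
  shows "tr_aut f"
  using assms unfolding tr_aut_def adj_fst by auto

lemma aut_comp: assumes "tr_aut f" "tr_aut g" shows "tr_aut (f \<circ> g)"
proof -
  have "bij (f \<circ> g)" using assms unfolding tr_aut_def by (auto intro: bij_comp)
  moreover have "tr_adj (f (g a)) (f (g b)) = tr_adj a b" for a b
    using assms unfolding tr_aut_def by (metis comp_apply)
  moreover have "tr_adj a b \<Longrightarrow> tr_sign (f (g a)) (f (g b)) = tr_sign a b" for a b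
    using assms unfolding tr_aut_def by metis
  ultimately show ?thesis unfolding tr_aut_def by simp
qed

lemma aut_inv: assumes "tr_aut f" shows "tr_aut (inv f)"
proof -
  have b: "bij f" using assms unfolding tr_aut_def by auto
  have fi: "f (inv f a) = a" for a using b by (simp add: bij_is_surj surj_f_inv_f)
  have "tr_adj (inv f a) (inv f b) = tr_adj a b" for a b
    using assms fi unfolding tr_aut_def by metis
  moreover have "tr_adj a b \<Longrightarrow> tr_sign (inv f a) (inv f b) = tr_sign a b" for a b
    using assms fi unfolding tr_aut_def by metis
  ultimately show ?thesis unfolding tr_aut_def using b bij_imp_bij_inv by blast
qed

lemma aut_id: "tr_aut id" unfolding tr_aut_def by auto

definition tT :: "'a::field \<Rightarrow> 'a tvert \<Rightarrow> 'a tvert" where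
  "tT c v = (map_option (\<lambda>u. u + c) (fst v), snd v)"
definition tS :: "'a::field \<Rightarrow> 'a tvert \<Rightarrow> 'a tvert" where
  "tS c v = (map_option (\<lambda>u. c * u) (fst v), snd v)"
definition tF :: "'a::field tvert \<Rightarrow> 'a tvert" where
  "tF v = (fst v, \<not> snd v)"
definition tI :: "'a::field tvert \<Rightarrow> 'a tvert" where
  "tI v = (case fst v of None \<Rightarrow> (Some 0, snd v)
     | Some u \<Rightarrow> if u = 0 then (None, snd v)
                else (Some (- inverse u), if sq u = 1 then snd v else \<not> snd v))"

lemma par_flip: "par_sign (\<not> i) j = - par_sign i j" "par_sign i (\<not> j) = - par_sign i j"
  by (auto simp: par_sign_def)

lemma aut_tT: "tr_aut (tT c)"
proof (rule aut_intro)
  show "bij (tT c)"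
    by (rule o_bij[where g = "tT (-c)"]) (auto simp: tT_def fun_eq_iff option.map_comp o_def option.map_ident)
  fix a b :: "'a tvert"
  show "fst (tT c a) \<noteq> fst (tT c b) \<longleftrightarrow> fst a \<noteq> fst b"
    by (cases a; cases b; cases "fst a"; cases "fst b"; auto simp: tT_def)
  show "fst a \<noteq> fst b \<Longrightarrow> tr_sign (tT c a) (tT c b) = tr_sign a b"
    by (cases a; cases b; cases "fst a"; cases "fst b"; auto simp: tT_def)
qed

lemma aut_tF: "tr_aut tF"
proof (rule aut_intro)
  show "bij tF" by (rule involuntory_imp_bij) (simp add: tF_def)
  fix a b :: "'a tvert"
  show "fst (tF a) \<noteq> fst (tF b) \<longleftrightarrow> fst a \<noteq> fst b" by (simp add: tF_def)
  show "fst a \<noteq> fst b \<Longrightarrow> tr_sign (tF a) (tF b) = tr_sign a b"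
    by (cases a; cases b; cases "fst a"; cases "fst b"; auto simp: tF_def par_sign_def)
qed

context
  fixes dummy :: "'a::{finite,field}"
  assumes C: "card (UNIV::'a set) mod 4 = 1"
begin

lemma aut_tS: assumes s: "(s::'a) \<noteq> 0" "sq s = 1" shows "tr_aut (tS s)"
proof (rule aut_intro)
  show "bij (tS s)"
    by (rule o_bij[where g = "tS (inverse s)"]) (auto simp: tS_def fun_eq_iff option.map_comp o_def s mult.assoc[symmetric] option.map_ident)
  fix a b :: "'a tvert"
  show "fst (tS s a) \<noteq> fst (tS s b) \<longleftrightarrow> fst a \<noteq> fst b"
    by (cases a; cases b; cases "fst a"; cases "fst b"; auto simp: tS_def s)
  have m: "sq (s * u - s * v) = sq (u - v)" if "u \<noteq> v" for u v
  proof -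
    have "s * u - s * v = s * (u - v)" by (simp add: algebra_simps)
    thus ?thesis using sq_mult[OF C s(1), of "u - v"] that s by simp
  qed
  show "fst a \<noteq> fst b \<Longrightarrow> tr_sign (tS s a) (tS s b) = tr_sign a b"
    by (cases a; cases b; cases "fst a"; cases "fst b"; auto simp: tS_def m)
qed

lemma par_cond: "par_sign i (if sq u = 1 then j else \<not> j) = par_sign i j * sq u"
  "par_sign (if sq u = 1 then j else \<not> j) i = par_sign j i * sq u"
  using sq_cases[of u] by (auto simp: par_sign_def)

lemma tI_invol: "tI (tI (v::'a tvert)) = v"
proof -
  obtain uo i where v: "v = (uo, i)" by fastforce
  show ?thesis
  proof (cases uo)
    case None thus ?thesis using v by (simp add: tI_def)
  next
    case (Some u)
    have "sq (- inverse u) = sq u" using sq_neg[OF C] sq_inverse[OF C] by simp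
    thus ?thesis using v Some by (auto simp: tI_def)
  qed
qed

lemma aut_tI: "tr_aut (tI :: 'a tvert \<Rightarrow> 'a tvert)"
proof (rule aut_intro)
  show "bij (tI :: 'a tvert \<Rightarrow> 'a tvert)" by (rule involuntory_imp_bij) (rule tI_invol)
  fix a b :: "'a tvert"
  obtain ao i bo j where ab: "a = (ao, i)" "b = (bo, j)" by fastforce
  show "fst (tI a) \<noteq> fst (tI b) \<longleftrightarrow> fst a \<noteq> fst b"
    using ab by (cases ao; cases bo; auto simp: tI_def split: if_splits)
  have sqm: "sq (- inverse u) = sq u" for u :: 'a using sq_neg[OF C] sq_inverse[OF C] by simp
  have sqm2: "sq (- u) = sq u" for u :: 'a using sq_neg[OF C] by simp
  have key: "sq (- inverse u + inverse v) = sq (u - v) * sq u * sq v"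
    if "u \<noteq> 0" "v \<noteq> 0" "u \<noteq> v" for u v :: 'a
  proof -
    have e: "- inverse u + inverse v = (u - v) * (inverse u * inverse v)"
      using that by (simp add: field_simps)
    have "sq ((u - v) * (inverse u * inverse v)) = sq (u - v) * (sq (inverse u) * sq (inverse v))"
      using that sq_mult[OF C] by simp
    thus ?thesis using e sq_inverse[OF C] by simp
  qed
  have sq2: "sq u * sq u = 1" for u :: 'a using sq_cases[of u] by auto
  show "fst a \<noteq> fst b \<Longrightarrow> tr_sign (tI a) (tI b) = tr_sign a b"
  proof (cases ao; cases bo)
    fix u v assume h: "fst a \<noteq> fst b" "ao = Some u" "bo = Some v"
    have uv: "u \<noteq> v" using h ab by auto
    show ?thesis
    proof (cases "u = 0"; cases "v = 0")
      assume "u \<noteq> 0" "v \<noteq> 0"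
      assume u0: "u \<noteq> 0" and v0: "v \<noteq> 0"
      have tIa: "tI a = (Some (- inverse u), if sq u = 1 then i else \<not> i)" using ab h u0 by (simp add: tI_def)
      have tIb: "tI b = (Some (- inverse v), if sq v = 1 then j else \<not> j)" using ab h v0 by (simp add: tI_def)
      have pc: "par_sign (if sq u = 1 then i else \<not> i) (if sq v = 1 then j else \<not> j) = par_sign i j * sq u * sq v"
        using sq_cases[of u] sq_cases[of v] by (auto simp: par_sign_def)
      have "tr_sign (tI a) (tI b) = sq (- inverse u - - inverse v) * par_sign (if sq u = 1 then i else \<not> i) (if sq v = 1 then j else \<not> j)"
        by (simp only: tIa tIb tr_sign.simps)
      also have "\<dots> = sq (u - v) * sq u * sq v * (par_sign i j * sq u * sq v)"
        using key[OF u0 v0 uv] pc by simp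
      also have "\<dots> = sq (u - v) * par_sign i j * (sq u * sq u) * (sq v * sq v)" by (simp add: algebra_simps)
      finally show ?thesis using ab h sq2 by simp
    next
      assume "u = 0" "v \<noteq> 0"
      thus ?thesis using ab h sqm2 sq_cases[of u] sq_cases[of v] by (auto simp: tI_def par_sign_def)
    next
      assume "u \<noteq> 0" "v = 0"
      thus ?thesis using ab h sqm2 sq_cases[of u] sq_cases[of v] by (auto simp: tI_def par_sign_def)
    next
      assume "u = 0" "v = 0" thus ?thesis using uv by simp
    qed
  next
    fix u assume h: "fst a \<noteq> fst b" "ao = Some u" "bo = None"
    show ?thesis
    proof (cases "u = 0")
      case True thus ?thesis using ab h by (simp add: tI_def)
    next
      case False
      thus ?thesis using ab h sqm sq_inverse[OF C] sq_cases[of u] sq_cases[of v] by (auto simp: tI_def par_sign_def)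
    qed
  next
    fix v assume h: "fst a \<noteq> fst b" "ao = None" "bo = Some v"
    show ?thesis
    proof (cases "v = 0")
      case True thus ?thesis using ab h by (simp add: tI_def)
    next
      case False
      thus ?thesis using ab h sqm sq_inverse[OF C] sq_cases[of u] sq_cases[of v] by (auto simp: tI_def par_sign_def)
    qed
  next
    assume "fst a \<noteq> fst b" "ao = None" "bo = None" thus ?thesis using ab by simp
  qed
qed

end

lemma aut_tri: "tr_aut h \<Longrightarrow> tr_triangle x y z \<Longrightarrow> tr_triangle (h x) (h y) (h z)"
  unfolding tr_aut_def tr_triangle_def by (metis prod.collapse)

lemma aut_sign: "tr_aut h \<Longrightarrow> tr_adj a b \<Longrightarrow> tr_sign (h a) (h b) = tr_sign a b"
  unfolding tr_aut_def by blast

context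
  fixes dummy :: "'a::{finite,field}"
  assumes C: "card (UNIV::'a set) mod 4 = 1"
begin

lemma normal_form:
  assumes n: "sq (n::'a) = -1" and T: "tr_triangle x y (z::'a tvert)"
  shows "\<exists>h j k c. tr_aut h \<and> (c = 1 \<or> c = n) \<and> h x = (None, False)
           \<and> h y = (Some 0, j) \<and> h z = (Some c, k)"
proof -
  obtain h1 where h1: "tr_aut h1" "fst (h1 x) = None"
  proof (cases "fst x")
    case None thus ?thesis using that aut_id by (metis id_apply)
  next
    case (Some u)
    have "fst ((tI \<circ> tT (-u)) x) = None" using Some by (simp add: tT_def tI_def)
    thus ?thesis using that aut_comp[OF aut_tI[OF C] aut_tT] by blast
  qed
  obtain h2 where h2: "tr_aut h2" "h2 x = (None, False)"
  proof (cases "snd (h1 x)")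
    case True
    have "(tF \<circ> h1) x = (None, False)" using True h1(2) by (simp add: tF_def prod_eq_iff)
    thus ?thesis using that aut_comp[OF aut_tF h1(1)] by blast
  next
    case False
    hence "h1 x = (None, False)" using h1(2) by (simp add: prod_eq_iff)
    thus ?thesis using that h1(1) by blast
  qed
  have T2: "tr_triangle (h2 x) (h2 y) (h2 z)" using aut_tri[OF h2(1) T] .
  obtain b j where hy: "h2 y = (Some b, j)" using T2 h2(2) unfolding tr_triangle_def adj_fst
    by (metis fst_conv not_None_eq prod.collapse)
  let ?h3 = "tT (-b) \<circ> h2"
  have h3: "tr_aut ?h3" "?h3 x = (None, False)" "?h3 y = (Some 0, j)"
    using aut_comp[OF aut_tT h2(1)] h2(2) hy by (auto simp: tT_def)
  have T3: "tr_triangle (?h3 x) (?h3 y) (?h3 z)" using aut_tri[OF h3(1) T] .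
  obtain c k where hz: "?h3 z = (Some c, k)" "c \<noteq> 0" using T3 h3(2,3) unfolding tr_triangle_def adj_fst
    by (metis fst_conv not_None_eq prod.collapse)
  define s where "s = (if sq c = 1 then inverse c else n * inverse c)"
  have s: "s \<noteq> 0" "sq s = 1"
  proof -
    have n0: "n \<noteq> 0" using n by (auto simp: sq_def)
    show "s \<noteq> 0" using hz(2) n0 by (simp add: s_def)
    show "sq s = 1"
    proof (cases "sq c = 1")
      case True thus ?thesis by (simp add: s_def sq_inverse[OF C])
    next
      case False
      hence "sq c = -1" using sq_cases[of c] by auto
      thus ?thesis using sq_mult[OF C n0, of "inverse c"] hz(2) n by (simp add: s_def sq_inverse[OF C])
    qed
  qed
  let ?h4 = "tS s \<circ> ?h3"
  have "tr_aut ?h4" using aut_comp[OF aut_tS[OF C s] h3(1)] .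
  moreover have "?h4 x = (None, False)" "?h4 y = (Some 0, j)" using h3 by (auto simp: tS_def)
  moreover have "?h4 z = (Some (s * c), k)" using hz by (simp add: tS_def)
  moreover have "s * c = 1 \<or> s * c = n" using hz(2) by (simp add: s_def)
  ultimately show ?thesis by blast
qed

end

theorem mainTheorem7:
  fixes \<psi> :: "'a::{finite,field} tvert \<Rightarrow> 'a tvert"
    and x y z x' y' z' :: "'a tvert"
  assumes "card (UNIV :: 'a set) mod 4 = 1"
    and "tr_triangle x y z"
    and "tr_triangle x' y' z'"
    and "bij_betw \<psi> {x, y, z} {x', y', z'}"
    and "\<forall>a\<in>{x, y, z}. \<forall>b\<in>{x, y, z}. tr_adj a b \<longrightarrow>
           tr_adj (\<psi> a) (\<psi> b) \<and> tr_sign (\<psi> a) (\<psi> b) = tr_sign a b"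
  shows "\<exists>f. tr_aut f \<and> (\<forall>v\<in>{x, y, z}. f v = \<psi> v)"
proof -
  note C = assms(1)
  obtain n :: 'a where n: "sq n = -1" using exists_nonsq[OF C] by blast
  have T: "tr_triangle x y z" by fact
  have adj: "tr_adj x y" "tr_adj y z" "tr_adj x z" using T unfolding tr_triangle_def by auto
  have P: "tr_adj (\<psi> x) (\<psi> y)" "tr_adj (\<psi> y) (\<psi> z)" "tr_adj (\<psi> x) (\<psi> z)"
    "tr_sign (\<psi> x) (\<psi> y) = tr_sign x y" "tr_sign (\<psi> y) (\<psi> z) = tr_sign y z"
    "tr_sign (\<psi> x) (\<psi> z) = tr_sign x z"
    using assms(5) adj by auto
  have T': "tr_triangle (\<psi> x) (\<psi> y) (\<psi> z)" using P unfolding tr_triangle_def by auto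
  obtain h1 j k c where H1: "tr_aut h1" "c = 1 \<or> c = n" "h1 x = (None, False)"
    "h1 y = (Some 0, j)" "h1 z = (Some c, k)" using normal_form[OF C n T] by blast
  obtain h2 j' k' c' where H2: "tr_aut h2" "c' = 1 \<or> c' = n" "h2 (\<psi> x) = (None, False)"
    "h2 (\<psi> y) = (Some 0, j')" "h2 (\<psi> z) = (Some c', k')" using normal_form[OF C n T'] by blast
  have s1: "tr_sign x y = par_sign False j" using aut_sign[OF H1(1) adj(1)] H1 by simp
  have s2: "tr_sign x z = par_sign False k" using aut_sign[OF H1(1) adj(3)] H1 by simp
  have s3: "tr_sign y z = sq c * par_sign j k"
    using aut_sign[OF H1(1) adj(2)] H1 sq_neg[OF C, of c] by simp
  have s1': "tr_sign (\<psi> x) (\<psi> y) = par_sign False j'" using aut_sign[OF H2(1) P(1)] H2 by simp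
  have s2': "tr_sign (\<psi> x) (\<psi> z) = par_sign False k'" using aut_sign[OF H2(1) P(3)] H2 by simp
  have s3': "tr_sign (\<psi> y) (\<psi> z) = sq c' * par_sign j' k'"
    using aut_sign[OF H2(1) P(2)] H2 sq_neg[OF C, of c'] by simp
  have jj: "j' = j" using s1 s1' P(4) by (auto simp: par_sign_def split: if_splits)
  have kk: "k' = k" using s2 s2' P(6) by (auto simp: par_sign_def split: if_splits)
  have sqc: "sq c' = sq c" using s3 s3' P(5) jj kk by (auto simp: par_sign_def split: if_splits)
  have sq1: "sq (1::'a) = 1" by (auto simp: sq_def intro: exI[of _ 1])
  have cc: "c' = c" using sqc H1(2) H2(2) n sq1 by auto
  have E: "h1 v = h2 (\<psi> v)" if "v \<in> {x, y, z}" for v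
    using that H1 H2 jj kk cc by auto
  have b2: "bij h2" using H2(1) unfolding tr_aut_def by auto
  show ?thesis
  proof (intro exI[of _ "inv h2 \<circ> h1"] conjI ballI)
    show "tr_aut (inv h2 \<circ> h1)" using aut_comp[OF aut_inv[OF H2(1)] H1(1)] .
    fix v assume "v \<in> {x, y, z}"
    thus "(inv h2 \<circ> h1) v = \<psi> v" using E b2 by (simp add: bij_is_inj)
  qed
qed

end
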